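(* Let $\mathcal{L}$ be a family of balanced algebraic laws over a signature $\Sigma$. Then the geometry monoid $\mathcal{G}(\mathcal{L})$ is an inverse monoid.
   Context: Terms $T_\Sigma(V)$ over an infinite set $V$ of variables; an algebraic law $l=r$ is balanced if the same variables occur in $l$ and $r$. Addresses are finite sequences of positive integers, $t/\alpha$ the subterm of $t$ at address $\alpha$. For an oriented law $L=(l,r)$ and an address $\alpha$, the partial operator $O^{+}_{L,\alpha}$ maps $t$ to $t'$ iff $t/\alpha=l\sigma$ for some substitution $\sigma$ and $t'$ is obtained from $t$ by replacing the $\alpha$-th subterm by $r\sigma$; $O^{-}_{L,\alpha}$ is its inverse partial map. Operators act on the right and $f\bullet g$ means "$f$ then $g$". The geometry monoid $\mathcal{G}(\mathcal{L})$ is the monoid of partial maps generated by all $O^{\pm}_{L,\alpha}$ under $\bullet$ (it may contain the empty map). *)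

theory Defs
  imports "HOL-Algebra.Group"
begin

datatype ('f, 'v) trm = Var 'v | Fun 'f "('f, 'v) trm list"

text \<open>A signature is a set of pairs (function symbol, arity).
  T_Sigma(V) is the set of well-formed terms.\<close>
fun wf_trm :: "('f \<times> nat) set \<Rightarrow> ('f, 'v) trm \<Rightarrow> bool" where
  "wf_trm \<Sigma> (Var x) = True"
| "wf_trm \<Sigma> (Fun f ts) = ((f, length ts) \<in> \<Sigma> \<and> (\<forall>t\<in>set ts. wf_trm \<Sigma> t))"

fun vars_trm :: "('f, 'v) trm \<Rightarrow> 'v set" where
  "vars_trm (Var x) = {x}"
| "vars_trm (Fun f ts) = (\<Union>t\<in>set ts. vars_trm t)"

fun subst_apply :: "('f, 'v) trm \<Rightarrow> ('v \<Rightarrow> ('f, 'v) trm) \<Rightarrow> ('f, 'v) trm" where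
  "subst_apply (Var x) \<sigma> = \<sigma> x"
| "subst_apply (Fun f ts) \<sigma> = Fun f (map (\<lambda>t. subst_apply t \<sigma>) ts)"

definition balanced :: "('f, 'v) trm \<times> ('f, 'v) trm \<Rightarrow> bool" where
  "balanced L = (vars_trm (fst L) = vars_trm (snd L))"

text \<open>Addresses are lists of positive integers; index i selects the i-th argument (1-based).\<close>
fun subterm_at :: "('f, 'v) trm \<Rightarrow> nat list \<Rightarrow> ('f, 'v) trm option" where
  "subterm_at t [] = Some t"
| "subterm_at (Var x) (i # \<alpha>) = None"
| "subterm_at (Fun f ts) (i # \<alpha>) =
     (if 1 \<le> i \<and> i \<le> length ts then subterm_at (ts ! (i - 1)) \<alpha> else None)"

fun replace_at :: "('f, 'v) trm \<Rightarrow> nat list \<Rightarrow> ('f, 'v) trm \<Rightarrow> ('f, 'v) trm" where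
  "replace_at t [] s = s"
| "replace_at (Var x) (i # \<alpha>) s = Var x"
| "replace_at (Fun f ts) (i # \<alpha>) s =
     (if 1 \<le> i \<and> i \<le> length ts
      then Fun f (ts[i - 1 := replace_at (ts ! (i - 1)) \<alpha> s]) else Fun f ts)"

type_synonym 'a pmap = "'a \<Rightarrow> 'a option"

text \<open>Composition acting on the right: f \<bullet> g means "f then g".\<close>
definition pcomp :: "'a pmap \<Rightarrow> 'a pmap \<Rightarrow> 'a pmap" (infixl "\<bullet>" 70) where
  "f \<bullet> g = (\<lambda>t. Option.bind (f t) g)"

definition pid :: "('f \<times> nat) set \<Rightarrow> ('f, 'v) trm pmap" where
  "pid \<Sigma> = (\<lambda>t. if wf_trm \<Sigma> t then Some t else None)"

definition pinv :: "'a pmap \<Rightarrow> 'a pmap" where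
  "pinv f = (\<lambda>t'. if \<exists>t. f t = Some t' then Some (SOME t. f t = Some t') else None)"

definition Oplus :: "('f \<times> nat) set \<Rightarrow> ('f, 'v) trm \<times> ('f, 'v) trm \<Rightarrow> nat list \<Rightarrow> ('f, 'v) trm pmap" where
  "Oplus \<Sigma> L \<alpha> = (\<lambda>t.
     if wf_trm \<Sigma> t \<and> (\<exists>\<sigma>. subterm_at t \<alpha> = Some (subst_apply (fst L) \<sigma>))
     then Some (replace_at t \<alpha>
            (subst_apply (snd L) (SOME \<sigma>. subterm_at t \<alpha> = Some (subst_apply (fst L) \<sigma>))))
     else None)"

definition Ominus :: "('f \<times> nat) set \<Rightarrow> ('f, 'v) trm \<times> ('f, 'v) trm \<Rightarrow> nat list \<Rightarrow> ('f, 'v) trm pmap" where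
  "Ominus \<Sigma> L \<alpha> = pinv (Oplus \<Sigma> L \<alpha>)"

inductive_set geom :: "('f \<times> nat) set \<Rightarrow> (('f, 'v) trm \<times> ('f, 'v) trm) set \<Rightarrow> ('f, 'v) trm pmap set"
  for \<Sigma> \<LL> where
  geom_id: "pid \<Sigma> \<in> geom \<Sigma> \<LL>"
| geom_plus: "L \<in> \<LL> \<Longrightarrow> (\<forall>i\<in>set \<alpha>. 0 < i) \<Longrightarrow> Oplus \<Sigma> L \<alpha> \<in> geom \<Sigma> \<LL>"
| geom_minus: "L \<in> \<LL> \<Longrightarrow> (\<forall>i\<in>set \<alpha>. 0 < i) \<Longrightarrow> Ominus \<Sigma> L \<alpha> \<in> geom \<Sigma> \<LL>"
| geom_comp: "f \<in> geom \<Sigma> \<LL> \<Longrightarrow> g \<in> geom \<Sigma> \<LL> \<Longrightarrow> f \<bullet> g \<in> geom \<Sigma> \<LL>"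

definition geom_monoid :: "('f \<times> nat) set \<Rightarrow> (('f, 'v) trm \<times> ('f, 'v) trm) set \<Rightarrow> ('f, 'v) trm pmap monoid" where
  "geom_monoid \<Sigma> \<LL> = \<lparr>carrier = geom \<Sigma> \<LL>, mult = (\<bullet>), one = pid \<Sigma>\<rparr>"

definition inverse_monoid :: "('a, 'b) monoid_scheme \<Rightarrow> bool" where
  "inverse_monoid M \<longleftrightarrow> monoid M \<and>
     (\<forall>x\<in>carrier M. \<exists>!y. y \<in> carrier M \<and> x \<otimes>\<^bsub>M\<^esub> y \<otimes>\<^bsub>M\<^esub> x = x \<and> y \<otimes>\<^bsub>M\<^esub> x \<otimes>\<^bsub>M\<^esub> y = y)"

end

theory Submission
  imports Defs
begin

lemma sub_rep: "subterm_at t \<alpha> = Some s \<Longrightarrow> subterm_at (replace_at t \<alpha> u) \<alpha> = Some u"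
  by (induction t \<alpha> rule: subterm_at.induct) (auto split: if_splits)

lemma rep_rep: "subterm_at t \<alpha> = Some s \<Longrightarrow> replace_at (replace_at t \<alpha> u) \<alpha> v = replace_at t \<alpha> v"
  by (induction t \<alpha> rule: subterm_at.induct) (auto split: if_splits)

lemma rep_same: "subterm_at t \<alpha> = Some s \<Longrightarrow> replace_at t \<alpha> s = t"
  by (induction t \<alpha> rule: subterm_at.induct) (auto split: if_splits)

lemma wf_sub: "subterm_at t \<alpha> = Some s \<Longrightarrow> wf_trm \<Sigma> t \<Longrightarrow> wf_trm \<Sigma> s"
  by (induction t \<alpha> rule: subterm_at.induct) (auto split: if_splits)

lemma wf_rep: "subterm_at t \<alpha> = Some s \<Longrightarrow> wf_trm \<Sigma> t \<Longrightarrow> wf_trm \<Sigma> u \<Longrightarrow> wf_trm \<Sigma> (replace_at t \<alpha> u)"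
proof (induction t \<alpha> rule: subterm_at.induct)
  case (3 f ts i \<alpha>)
  then show ?case
    by (auto split: if_splits dest!: set_update_subset_insert[THEN subsetD])
qed auto

lemma wf_subst_vars: "wf_trm \<Sigma> (subst_apply t \<sigma>) \<Longrightarrow> x \<in> vars_trm t \<Longrightarrow> wf_trm \<Sigma> (\<sigma> x)"
  by (induction t) auto

lemma wf_subst: "wf_trm \<Sigma> t \<Longrightarrow> (\<forall>x\<in>vars_trm t. wf_trm \<Sigma> (\<sigma> x)) \<Longrightarrow> wf_trm \<Sigma> (subst_apply t \<sigma>)"
  by (induction t) auto

lemma subst_eq: "subst_apply t \<sigma> = subst_apply t \<tau> \<longleftrightarrow> (\<forall>x\<in>vars_trm t. \<sigma> x = \<tau> x)"
  by (induction t) (auto simp: map_eq_conv)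

lemma Oplus_iff:
  assumes bal: "balanced L"
  shows "Oplus \<Sigma> L \<alpha> t = Some t' \<longleftrightarrow> wf_trm \<Sigma> t \<and>
     (\<exists>\<sigma>. subterm_at t \<alpha> = Some (subst_apply (fst L) \<sigma>) \<and> t' = replace_at t \<alpha> (subst_apply (snd L) \<sigma>))"
proof
  assume "Oplus \<Sigma> L \<alpha> t = Some t'"
    then have w: "wf_trm \<Sigma> t" and ex: "\<exists>\<sigma>. subterm_at t \<alpha> = Some (subst_apply (fst L) \<sigma>)"
      and t': "t' = replace_at t \<alpha> (subst_apply (snd L) (SOME \<sigma>. subterm_at t \<alpha> = Some (subst_apply (fst L) \<sigma>)))"
      unfolding Oplus_def by (auto split: if_splits)
    have "subterm_at t \<alpha> = Some (subst_apply (fst L) (SOME \<sigma>. subterm_at t \<alpha> = Some (subst_apply (fst L) \<sigma>)))"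
      using ex by (rule someI_ex)
    then show "wf_trm \<Sigma> t \<and>
     (\<exists>\<sigma>. subterm_at t \<alpha> = Some (subst_apply (fst L) \<sigma>) \<and> t' = replace_at t \<alpha> (subst_apply (snd L) \<sigma>))"
      using w t' by blast
next
  assume A: "wf_trm \<Sigma> t \<and>
     (\<exists>\<sigma>. subterm_at t \<alpha> = Some (subst_apply (fst L) \<sigma>) \<and> t' = replace_at t \<alpha> (subst_apply (snd L) \<sigma>))"
  then obtain \<sigma> where s: "subterm_at t \<alpha> = Some (subst_apply (fst L) \<sigma>)"
    and t': "t' = replace_at t \<alpha> (subst_apply (snd L) \<sigma>)" by blast
  define \<sigma>0 where "\<sigma>0 = (SOME \<sigma>. subterm_at t \<alpha> = Some (subst_apply (fst L) \<sigma>))"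
  have s0: "subterm_at t \<alpha> = Some (subst_apply (fst L) \<sigma>0)"
    unfolding \<sigma>0_def using s by (rule someI[where P="\<lambda>\<sigma>. subterm_at t \<alpha> = Some (subst_apply (fst L) \<sigma>)"])
  have "subst_apply (fst L) \<sigma>0 = subst_apply (fst L) \<sigma>" using s s0 by simp
  then have e0: "subst_apply (snd L) \<sigma>0 = subst_apply (snd L) \<sigma>"
    using bal unfolding balanced_def by (simp add: subst_eq)
  have cond: "wf_trm \<Sigma> t \<and> (\<exists>\<sigma>. subterm_at t \<alpha> = Some (subst_apply (fst L) \<sigma>))"
    using A s by blast
  have "Oplus \<Sigma> L \<alpha> t = Some (replace_at t \<alpha> (subst_apply (snd L) \<sigma>0))"
    unfolding Oplus_def \<sigma>0_def[symmetric] by (simp only: if_P[OF cond])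
  then show "Oplus \<Sigma> L \<alpha> t = Some t'"
    using t' e0 by simp
qed

definition good :: "('f \<times> nat) set \<Rightarrow> ('f, 'v) trm pmap \<Rightarrow> bool" where
  "good \<Sigma> f \<longleftrightarrow> (\<forall>t t'. f t = Some t' \<longrightarrow> wf_trm \<Sigma> t \<and> wf_trm \<Sigma> t') \<and>
     (\<forall>t1 t2 u. f t1 = Some u \<longrightarrow> f t2 = Some u \<longrightarrow> t1 = t2)"

lemma pinv_iff: "(\<forall>t1 t2 u. f t1 = Some u \<longrightarrow> f t2 = Some u \<longrightarrow> t1 = t2) \<Longrightarrow>
   pinv f t' = Some t \<longleftrightarrow> f t = Some t'"
  unfolding pinv_def by (auto intro: someI)

lemma good_pinv_iff: "good \<Sigma> f \<Longrightarrow> pinv f t' = Some t \<longleftrightarrow> f t = Some t'"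
  unfolding good_def by (rule pinv_iff) blast

lemma good_pinv: assumes g: "good \<Sigma> f" shows "good \<Sigma> (pinv f)"
  using g unfolding good_def[of _ "pinv f"] good_pinv_iff[OF g] unfolding good_def by auto

lemma pmap_eqI: "(\<And>t u. f t = Some u \<longleftrightarrow> g t = Some u) \<Longrightarrow> f = g"
  by (rule ext) (metis option.exhaust)

lemma pinv_pinv: assumes g: "good \<Sigma> f" shows "pinv (pinv f) = f"
  by (rule pmap_eqI) (simp add: good_pinv_iff[OF good_pinv[OF g]] good_pinv_iff[OF g])

lemma pcomp_Some: "(f \<bullet> g) t = Some u \<longleftrightarrow> (\<exists>s. f t = Some s \<and> g s = Some u)"
  unfolding pcomp_def by (cases "f t") auto

lemma good_comp: "good \<Sigma> f \<Longrightarrow> good \<Sigma> g \<Longrightarrow> good \<Sigma> (f \<bullet> g)"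
  unfolding good_def pcomp_Some by metis

lemma pinv_comp: assumes f: "good \<Sigma> f" and g: "good \<Sigma> g" shows "pinv (f \<bullet> g) = pinv g \<bullet> pinv f"
  by (rule pmap_eqI) (auto simp: good_pinv_iff[OF good_comp[OF f g]] good_pinv_iff[OF f] good_pinv_iff[OF g] pcomp_Some)

lemma good_pid: "good \<Sigma> (pid \<Sigma>)"
  unfolding good_def pid_def by (auto split: if_splits)

lemma pinv_pid: "pinv (pid \<Sigma>) = pid \<Sigma>"
  by (rule pmap_eqI) (simp add: good_pinv_iff[OF good_pid], auto simp: pid_def)

lemma good_Oplus:
  assumes "wf_trm \<Sigma> (fst L) \<and> wf_trm \<Sigma> (snd L)" "balanced L"
  shows "good \<Sigma> (Oplus \<Sigma> L \<alpha>)"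
  unfolding good_def
proof (rule conjI; intro allI impI)
  fix t t' assume "Oplus \<Sigma> L \<alpha> t = Some t'"
  then obtain \<sigma> where w: "wf_trm \<Sigma> t" and s: "subterm_at t \<alpha> = Some (subst_apply (fst L) \<sigma>)"
    and t': "t' = replace_at t \<alpha> (subst_apply (snd L) \<sigma>)"
    using Oplus_iff[OF assms(2)] by blast
  have "wf_trm \<Sigma> (subst_apply (fst L) \<sigma>)" using wf_sub[OF s w] .
  then have "\<forall>x\<in>vars_trm (snd L). wf_trm \<Sigma> (\<sigma> x)"
    using assms(2) unfolding balanced_def by (metis wf_subst_vars)
  then have "wf_trm \<Sigma> (subst_apply (snd L) \<sigma>)" using assms(1) wf_subst by blast
  then show "wf_trm \<Sigma> t \<and> wf_trm \<Sigma> t'" using w t' wf_rep[OF s w] by blast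
next
  fix t1 t2 u assume a1: "Oplus \<Sigma> L \<alpha> t1 = Some u" and a2: "Oplus \<Sigma> L \<alpha> t2 = Some u"
  obtain \<sigma>1 where s1: "subterm_at t1 \<alpha> = Some (subst_apply (fst L) \<sigma>1)"
    and u1: "u = replace_at t1 \<alpha> (subst_apply (snd L) \<sigma>1)"
    using a1 Oplus_iff[OF assms(2)] by blast
  obtain \<sigma>2 where s2: "subterm_at t2 \<alpha> = Some (subst_apply (fst L) \<sigma>2)"
    and u2: "u = replace_at t2 \<alpha> (subst_apply (snd L) \<sigma>2)"
    using a2 Oplus_iff[OF assms(2)] by blast
  have "subterm_at u \<alpha> = Some (subst_apply (snd L) \<sigma>1)" using u1 sub_rep[OF s1] by simp
  moreover have "subterm_at u \<alpha> = Some (subst_apply (snd L) \<sigma>2)" using u2 sub_rep[OF s2] by simp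
  ultimately have "subst_apply (snd L) \<sigma>1 = subst_apply (snd L) \<sigma>2" by simp
  then have e: "subst_apply (fst L) \<sigma>1 = subst_apply (fst L) \<sigma>2"
    using assms(2) unfolding balanced_def by (simp add: subst_eq)
  have "t1 = replace_at u \<alpha> (subst_apply (fst L) \<sigma>1)"
    using u1 rep_rep[OF s1] rep_same[OF s1] by simp
  moreover have "t2 = replace_at u \<alpha> (subst_apply (fst L) \<sigma>2)"
    using u2 rep_rep[OF s2] rep_same[OF s2] by simp
  ultimately show "t1 = t2" using e by simp
qed

lemma geom_good:
  assumes "\<forall>L\<in>\<LL>. wf_trm \<Sigma> (fst L) \<and> wf_trm \<Sigma> (snd L)" "\<forall>L\<in>\<LL>. balanced L"
  shows "f \<in> geom \<Sigma> \<LL> \<Longrightarrow> good \<Sigma> f \<and> pinv f \<in> geom \<Sigma> \<LL>"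
proof (induction rule: geom.induct)
  case geom_id
  show ?case by (simp add: good_pid pinv_pid geom.geom_id)
next
  case (geom_plus L \<alpha>)
  have g: "good \<Sigma> (Oplus \<Sigma> L \<alpha>)"
    using assms geom_plus(1) by (simp add: good_Oplus)
  have "Ominus \<Sigma> L \<alpha> \<in> geom \<Sigma> \<LL>" by (rule geom.geom_minus[OF geom_plus])
  then show ?case using g by (simp add: Ominus_def)
next
  case (geom_minus L \<alpha>)
  have g: "good \<Sigma> (Oplus \<Sigma> L \<alpha>)"
    using assms geom_minus(1) by (simp add: good_Oplus)
  have "Oplus \<Sigma> L \<alpha> \<in> geom \<Sigma> \<LL>" by (rule geom.geom_plus[OF geom_minus])
  then show ?case using g by (simp add: Ominus_def good_pinv pinv_pinv[OF g])
next
  case (geom_comp f g)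
  then have "good \<Sigma> f" "good \<Sigma> g" "pinv f \<in> geom \<Sigma> \<LL>" "pinv g \<in> geom \<Sigma> \<LL>" by auto
  then show ?case by (simp add: good_comp pinv_comp geom.geom_comp)
qed

lemma pcomp_assoc: "(f \<bullet> g) \<bullet> h = f \<bullet> (g \<bullet> h)"
  unfolding pcomp_def by (rule ext) (case_tac "f x"; simp)

lemma good_pid_l: "good \<Sigma> f \<Longrightarrow> pid \<Sigma> \<bullet> f = f"
  by (rule pmap_eqI) (auto simp: pcomp_Some pid_def good_def)

lemma good_pid_r: "good \<Sigma> f \<Longrightarrow> f \<bullet> pid \<Sigma> = f"
  by (rule pmap_eqI) (auto simp: pcomp_Some pid_def good_def)

lemma inverse_unique:
  assumes gx: "good \<Sigma> x" and gy: "good \<Sigma> y"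
    and h1: "x \<bullet> y \<bullet> x = x" and h2: "y \<bullet> x \<bullet> y = y"
  shows "y = pinv x"
proof (rule pmap_eqI)
  fix t u
  show "y t = Some u \<longleftrightarrow> pinv x t = Some u"
  proof
    assume yt: "y t = Some u"
    then have "(y \<bullet> x \<bullet> y) t = Some u" using h2 by simp
    then obtain a b where "y t = Some a" "x a = Some b" "y b = Some u"
      by (auto simp: pcomp_Some)
    with yt gy have "b = t" unfolding good_def by metis
    then show "pinv x t = Some u" using good_pinv_iff[OF gx] \<open>x a = Some b\<close> \<open>y t = Some a\<close> yt by simp
  next
    assume "pinv x t = Some u"
    then have xu: "x u = Some t" using good_pinv_iff[OF gx] by simp
    then have "(x \<bullet> y \<bullet> x) u = Some t" using h1 by simp
    then obtain a b where "x u = Some a" "y a = Some b" "x b = Some t"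
      by (auto simp: pcomp_Some)
    with xu gx have "a = t" "b = u" unfolding good_def by (metis option.inject)+
    then show "y t = Some u" using \<open>y a = Some b\<close> by simp
  qed
qed

theorem proposition1p8:
  fixes \<Sigma> :: "('f \<times> nat) set" and \<LL> :: "(('f, 'v) trm \<times> ('f, 'v) trm) set"
  assumes "infinite (UNIV :: 'v set)"
    and "\<forall>L\<in>\<LL>. wf_trm \<Sigma> (fst L) \<and> wf_trm \<Sigma> (snd L)"
    and "\<forall>L\<in>\<LL>. balanced L"
  shows "inverse_monoid (geom_monoid \<Sigma> \<LL>)"
proof -
  note G = geom_good[OF assms(2,3)]
  have mon: "monoid (geom_monoid \<Sigma> \<LL>)"
    by (rule monoidI) (auto simp: geom_monoid_def geom.geom_comp geom.geom_id pcomp_assoc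
        good_pid_l good_pid_r G)
  have inv_ok: "x \<bullet> pinv x \<bullet> x = x \<and> pinv x \<bullet> x \<bullet> pinv x = pinv x" if g: "good \<Sigma> x" for x
  proof -
    have gi: "good \<Sigma> (pinv x)" using good_pinv[OF g] .
    have "x \<bullet> pinv x \<bullet> x = x"
      by (rule pmap_eqI) (auto simp: pcomp_Some good_pinv_iff[OF g])
    moreover have "pinv x \<bullet> x \<bullet> pinv x = pinv x"
      by (rule pmap_eqI) (auto simp: pcomp_Some good_pinv_iff[OF g])
    ultimately show ?thesis by simp
  qed
  show ?thesis
    unfolding inverse_monoid_def
  proof (intro conjI mon ballI)
    fix x assume "x \<in> carrier (geom_monoid \<Sigma> \<LL>)"
    then have x: "x \<in> geom \<Sigma> \<LL>" by (simp add: geom_monoid_def)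
    have "\<exists>!y. y \<in> geom \<Sigma> \<LL> \<and> x \<bullet> y \<bullet> x = x \<and> y \<bullet> x \<bullet> y = y"
    proof (rule ex1I[of _ "pinv x"])
      show "pinv x \<in> geom \<Sigma> \<LL> \<and> x \<bullet> pinv x \<bullet> x = x \<and> pinv x \<bullet> x \<bullet> pinv x = pinv x"
        using G[OF x] inv_ok by blast
    next
      fix y assume "y \<in> geom \<Sigma> \<LL> \<and> x \<bullet> y \<bullet> x = x \<and> y \<bullet> x \<bullet> y = y"
      then show "y = pinv x" using inverse_unique G x by blast
    qed
    then show "\<exists>!y. y \<in> carrier (geom_monoid \<Sigma> \<LL>) \<and> x \<otimes>\<^bsub>geom_monoid \<Sigma> \<LL>\<^esub> y \<otimes>\<^bsub>geom_monoid \<Sigma> \<LL>\<^esub> x = x \<and>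
        y \<otimes>\<^bsub>geom_monoid \<Sigma> \<LL>\<^esub> x \<otimes>\<^bsub>geom_monoid \<Sigma> \<LL>\<^esub> y = y"
      by (simp add: geom_monoid_def)
  qed
qed

end
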